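(* Let $p$ be a lattice norm on $\mathbb{R}^2$ with $p((1,0))=p((0,1))=1$, let $\Phi$ be an Orlicz function with $a(\Phi)>0$, and assume that either $\mu$ is non-atomic with $\mu(\Omega)=\infty$, or $\Omega=\mathbb{N}$, $\Sigma=2^{\mathbb{N}}$ and $\mu$ is the counting measure. Then $(L^\Phi(\mu),\|\cdot\|_{\Phi,p})$ is neither strictly monotone nor strictly convex.
   Context: $(\Omega,\Sigma,\mu)$ is a $\sigma$-finite complete measure space, $L^0$ the space of (classes of a.e. equal) real measurable functions, ordered pointwise a.e. An Orlicz function is a function $\Phi:\mathbb{R}\to[0,\infty)$ which is convex, even, vanishes at $0$ and is not identically zero; $a(\Phi)=\sup\{u\ge0:\Phi(u)=0\}$. $I_\Phi(x)=\int_\Omega\Phi(x(t))\,d\mu\in[0,+\infty]$; $L^\Phi(\mu)=\{x\in L^0: I_\Phi(\lambda x)<\infty\text{ for some }\lambda>0\}$. A lattice norm on $\mathbb{R}^2$ is a norm $p$ with $p((u,v))\le p((u',v'))$ whenever $|u|\le|u'|,|v|\le|v'|$; $\|x\|_{\Phi,p}=\inf_{k>0}\frac1k p((1,I_\Phi(kx)))$ with the convention $p((1,+\infty))=+\infty$. A normed lattice is strictly monotone if $0\le x\le y$, $x\ne y$ imply $\|x\|<\|y\|$; it is strictly convex if $\|x\|=\|y\|=1$, $x\neq y$ imply $\|(x+y)/2\|<1$. *)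

theory Defs
  imports "HOL-Analysis.Analysis"
begin

definition orlicz_function :: "(real \<Rightarrow> real) \<Rightarrow> bool" where
  "orlicz_function \<Phi> \<longleftrightarrow> convex_on UNIV \<Phi> \<and> (\<forall>u. \<Phi> (- u) = \<Phi> u) \<and>
     (\<forall>u. 0 \<le> \<Phi> u) \<and> \<Phi> 0 = 0 \<and> (\<exists>u. \<Phi> u \<noteq> 0)"

definition orlicz_a :: "(real \<Rightarrow> real) \<Rightarrow> real" where
  "orlicz_a \<Phi> = Sup {u. 0 \<le> u \<and> \<Phi> u = 0}"

definition lattice_norm :: "(real \<times> real \<Rightarrow> real) \<Rightarrow> bool" where
  "lattice_norm p \<longleftrightarrow>
     (\<forall>z. p z = 0 \<longleftrightarrow> z = (0, 0)) \<and>
     (\<forall>c z. p (c *\<^sub>R z) = \<bar>c\<bar> * p z) \<and>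
     (\<forall>z w. p (z + w) \<le> p z + p w) \<and>
     (\<forall>u v u' v'. \<bar>u\<bar> \<le> \<bar>u'\<bar> \<and> \<bar>v\<bar> \<le> \<bar>v'\<bar> \<longrightarrow> p (u, v) \<le> p (u', v'))"

definition non_atomic :: "'a measure \<Rightarrow> bool" where
  "non_atomic M \<longleftrightarrow> (\<forall>A\<in>sets M. 0 < emeasure M A \<longrightarrow>
     (\<exists>B\<in>sets M. B \<subseteq> A \<and> 0 < emeasure M B \<and> emeasure M B < emeasure M A))"

definition orlicz_modular :: "'a measure \<Rightarrow> (real \<Rightarrow> real) \<Rightarrow> ('a \<Rightarrow> real) \<Rightarrow> ennreal" where
  "orlicz_modular M \<Phi> x = (\<integral>\<^sup>+ t. ennreal (\<Phi> (x t)) \<partial>M)"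

definition orlicz_space :: "'a measure \<Rightarrow> (real \<Rightarrow> real) \<Rightarrow> ('a \<Rightarrow> real) set" where
  "orlicz_space M \<Phi> = {x \<in> borel_measurable M.
      \<exists>c>0. orlicz_modular M \<Phi> (\<lambda>t. c * x t) < \<infinity>}"

text \<open>p-Amemiya norm, with the convention p((1,+infinity)) = +infinity.\<close>
definition orlicz_p_norm ::
  "'a measure \<Rightarrow> (real \<Rightarrow> real) \<Rightarrow> (real \<times> real \<Rightarrow> real) \<Rightarrow> ('a \<Rightarrow> real) \<Rightarrow> ennreal" where
  "orlicz_p_norm M \<Phi> p x =
     (INF k\<in>{0::real<..}.
        (if orlicz_modular M \<Phi> (\<lambda>t. k * x t) = \<infinity> then \<infinity>
         else ennreal (p (1, enn2real (orlicz_modular M \<Phi> (\<lambda>t. k * x t))) / k)))"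

definition strictly_monotone_orlicz ::
  "'a measure \<Rightarrow> (real \<Rightarrow> real) \<Rightarrow> (real \<times> real \<Rightarrow> real) \<Rightarrow> bool" where
  "strictly_monotone_orlicz M \<Phi> p \<longleftrightarrow>
     (\<forall>x\<in>orlicz_space M \<Phi>. \<forall>y\<in>orlicz_space M \<Phi>.
        (AE t in M. 0 \<le> x t) \<and> (AE t in M. x t \<le> y t) \<and> \<not> (AE t in M. x t = y t)
        \<longrightarrow> orlicz_p_norm M \<Phi> p x < orlicz_p_norm M \<Phi> p y)"

definition strictly_convex_orlicz ::
  "'a measure \<Rightarrow> (real \<Rightarrow> real) \<Rightarrow> (real \<times> real \<Rightarrow> real) \<Rightarrow> bool" where
  "strictly_convex_orlicz M \<Phi> p \<longleftrightarrow>
     (\<forall>x\<in>orlicz_space M \<Phi>. \<forall>y\<in>orlicz_space M \<Phi>.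
        orlicz_p_norm M \<Phi> p x = 1 \<and> orlicz_p_norm M \<Phi> p y = 1 \<and> \<not> (AE t in M. x t = y t)
        \<longrightarrow> orlicz_p_norm M \<Phi> p (\<lambda>t. (x t + y t) / 2) < 1)"

end

theory Submission
  imports Defs
begin

lemma phi_facts:
  assumes phi: "orlicz_function \<Phi>" and apos: "orlicz_a \<Phi> > 0"
  shows "\<And>u. \<bar>u\<bar> < orlicz_a \<Phi> \<Longrightarrow> \<Phi> u = 0"
    and "\<And>u. u > orlicz_a \<Phi> \<Longrightarrow> \<Phi> u > 0"
proof -
  define Z where "Z = {u. 0 \<le> u \<and> \<Phi> u = 0}"
  have cv: "convex_on UNIV \<Phi>" and ev: "\<And>u. \<Phi> (- u) = \<Phi> u" and nn: "\<And>u. 0 \<le> \<Phi> u"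
    and z0: "\<Phi> 0 = 0" and ex: "\<exists>u. \<Phi> u \<noteq> 0"
    using phi unfolding orlicz_function_def by auto
  have evabs: "\<Phi> \<bar>u\<bar> = \<Phi> u" for u
    by (cases "u \<ge> 0") (auto simp: ev[of u, symmetric])
  have down: "\<Phi> v = 0" if "\<Phi> u = 0" "0 \<le> v" "v \<le> u" for u v
  proof (cases "u = 0")
    case True then show ?thesis using that z0 by auto
  next
    case False
    then have up: "u > 0" using that by auto
    define t where "t = v / u"
    have t: "0 \<le> t" "t \<le> 1" using that up by (auto simp: t_def field_simps)
    have "\<Phi> ((1 - t) * 0 + t * u) \<le> (1 - t) * \<Phi> 0 + t * \<Phi> u"
      using convex_onD[OF cv t, of 0 u] by auto
    moreover have "(1 - t) * 0 + t * u = v" using up by (simp add: t_def)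
    ultimately show ?thesis using that z0 nn[of v] by auto
  qed
  obtain u0 where u0: "\<Phi> u0 \<noteq> 0" using ex by auto
  define w where "w = \<bar>u0\<bar>"
  have w: "\<Phi> w \<noteq> 0" using u0 evabs by (simp add: w_def)
  have bdd: "bdd_above Z"
  proof
    fix z assume "z \<in> Z"
    then show "z \<le> w" using down[of z w] w by (force simp: Z_def w_def)
  qed
  have a_def': "orlicz_a \<Phi> = Sup Z" by (simp add: orlicz_a_def Z_def)
  have Zne: "Z \<noteq> {}" using z0 by (auto simp: Z_def intro!: exI[of _ 0])
  show "\<Phi> u = 0" if hu: "\<bar>u\<bar> < orlicz_a \<Phi>" for u
  proof -
    obtain z where "z \<in> Z" "\<bar>u\<bar> < z" using hu less_cSup_iff[OF Zne bdd] a_def' by auto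
    then have "\<Phi> \<bar>u\<bar> = 0" using down[of z "\<bar>u\<bar>"] by (auto simp: Z_def)
    then show ?thesis using evabs by simp
  qed
  show "\<Phi> u > 0" if "u > orlicz_a \<Phi>" for u
  proof (rule ccontr)
    assume "\<not> \<Phi> u > 0"
    then have "\<Phi> u = 0" using nn[of u] by auto
    then have "u \<in> Z" using that apos by (auto simp: Z_def)
    then have "u \<le> Sup Z" using cSup_upper[OF _ bdd] by auto
    then show False using that a_def' by auto
  qed
qed

lemma modular_zero:
  assumes phi: "orlicz_function \<Phi>" and apos: "orlicz_a \<Phi> > 0"
    and bd: "\<And>t. t \<in> space M \<Longrightarrow> \<bar>x t\<bar> \<le> orlicz_a \<Phi>"
    and k: "0 < k" "k < 1"
  shows "orlicz_modular M \<Phi> (\<lambda>t. k * x t) = 0"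
proof -
  have "\<Phi> (k * x t) = 0" if "t \<in> space M" for t
  proof (rule phi_facts(1)[OF phi apos])
    have "\<bar>k * x t\<bar> = k * \<bar>x t\<bar>" using k by (simp add: abs_mult)
    also have "\<dots> \<le> k * orlicz_a \<Phi>" using bd[OF that] k by (simp add: mult_left_mono)
    also have "\<dots> < orlicz_a \<Phi>" using k apos by simp
    finally show "\<bar>k * x t\<bar> < orlicz_a \<Phi>" .
  qed
  then have "orlicz_modular M \<Phi> (\<lambda>t. k * x t) = (\<integral>\<^sup>+ t. 0 \<partial>M)"
    unfolding orlicz_modular_def by (intro nn_integral_cong) simp
  then show ?thesis by simp
qed

lemma norm_one:
  assumes phi: "orlicz_function \<Phi>" and apos: "orlicz_a \<Phi> > 0"
    and ln: "lattice_norm p" and p10: "p (1, 0) = 1"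
    and bd: "\<And>t. t \<in> space M \<Longrightarrow> \<bar>x t\<bar> \<le> orlicz_a \<Phi>"
    and S: "S \<in> sets M" "emeasure M S = \<infinity>" "\<And>t. t \<in> S \<Longrightarrow> \<bar>x t\<bar> = orlicz_a \<Phi>"
  shows "orlicz_p_norm M \<Phi> p x = 1"
proof -
  define T where "T k = (if orlicz_modular M \<Phi> (\<lambda>t. k * x t) = \<infinity> then \<infinity>
         else ennreal (p (1, enn2real (orlicz_modular M \<Phi> (\<lambda>t. k * x t))) / k))" for k
  have N: "orlicz_p_norm M \<Phi> p x = (INF k\<in>{0::real<..}. T k)"
    unfolding orlicz_p_norm_def T_def by simp
  have pmono: "\<And>u v u' v'. \<bar>u\<bar> \<le> \<bar>u'\<bar> \<and> \<bar>v\<bar> \<le> \<bar>v'\<bar> \<Longrightarrow> p (u, v) \<le> p (u', v')"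
    using ln unfolding lattice_norm_def by blast
  have small: "T k = ennreal (1 / k)" if "0 < k" "k < 1" for k
    using modular_zero[of \<Phi> M x k, OF phi apos bd that] p10 by (simp add: T_def)
  have big: "T k = \<infinity>" if "1 < k" for k
  proof -
    have pos: "\<Phi> (k * orlicz_a \<Phi>) > 0"
      using phi_facts(2)[OF phi apos, of "k * orlicz_a \<Phi>"] that apos by simp
    have ev: "\<Phi> (- u) = \<Phi> u" for u using phi unfolding orlicz_function_def by auto
    have eqS: "\<Phi> (k * x t) = \<Phi> (k * orlicz_a \<Phi>)" if "t \<in> S" for t
    proof -
      have "x t = orlicz_a \<Phi> \<or> x t = - orlicz_a \<Phi>" using S(3)[OF that] by auto
      then show ?thesis using ev[of "k * orlicz_a \<Phi>"] by auto
    qed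
    have "(\<integral>\<^sup>+ t. ennreal (\<Phi> (k * orlicz_a \<Phi>)) * indicator S t \<partial>M)
          \<le> orlicz_modular M \<Phi> (\<lambda>t. k * x t)"
      unfolding orlicz_modular_def
      by (intro nn_integral_mono) (auto simp: indicator_def eqS)
    moreover have "(\<integral>\<^sup>+ t. ennreal (\<Phi> (k * orlicz_a \<Phi>)) * indicator S t \<partial>M) = \<infinity>"
      using nn_integral_cmult_indicator[OF S(1)] S(2) pos by (simp add: ennreal_mult_top)
    ultimately show ?thesis by (simp add: T_def top_unique)
  qed
  have lowk: "ennreal (1 / k) \<le> T k" if "0 < k" for k
  proof (cases "orlicz_modular M \<Phi> (\<lambda>t. k * x t) = \<infinity>")
    case True then show ?thesis by (simp add: T_def)
  next
    case False
    have "1 \<le> p (1, enn2real (orlicz_modular M \<Phi> (\<lambda>t. k * x t)))"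
    proof -
      have "p (1, 0) \<le> p (1, enn2real (orlicz_modular M \<Phi> (\<lambda>t. k * x t)))"
        by (rule pmono) simp
      then show ?thesis using p10 by simp
    qed
    then have "1 / k \<le> p (1, enn2real (orlicz_modular M \<Phi> (\<lambda>t. k * x t))) / k"
      using that by (simp add: divide_right_mono)
    then show ?thesis using False by (simp add: T_def ennreal_leI)
  qed
  have "1 \<le> (INF k\<in>{0::real<..}. T k)"
  proof (rule INF_greatest)
    fix k :: real assume "k \<in> {0<..}"
    then have k: "0 < k" by simp
    show "1 \<le> T k"
    proof (cases "k \<le> 1")
      case True
      then have "1 \<le> 1 / k" using k by simp
      then have "(1::ennreal) \<le> ennreal (1 / k)" by (simp add: ennreal_leI)
      then show ?thesis using lowk[OF k] by (rule order_trans)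
    next
      case False then show ?thesis using big by simp
    qed
  qed
  moreover have "(INF k\<in>{0::real<..}. T k) \<le> 1"
  proof (rule ennreal_le_epsilon)
    fix e :: real assume e: "0 < e"
    define k where "k = 1 / (1 + e)"
    have k: "0 < k" "k < 1" using e by (auto simp: k_def)
    have "(INF k\<in>{0::real<..}. T k) \<le> T k" using k by (intro INF_lower) simp
    also have "\<dots> = ennreal (1 + e)" using small[OF k] by (simp add: k_def)
    also have "\<dots> = 1 + ennreal e" using e by (simp add: ennreal_plus)
    finally show "(INF k\<in>{0::real<..}. T k) \<le> 1 + ennreal e" .
  qed
  ultimately show ?thesis using N by simp
qed

theorem corollary2:
  fixes M :: "'a measure" and \<Phi> :: "real \<Rightarrow> real" and p :: "real \<times> real \<Rightarrow> real"
  assumes "sigma_finite_measure M" and "complete_measure M"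
    and "lattice_norm p" and "p (1, 0) = 1" and "p (0, 1) = 1"
    and "orlicz_function \<Phi>" and "orlicz_a \<Phi> > 0"
    and "(non_atomic M \<and> emeasure M (space M) = \<infinity>) \<or>
         (countable (space M) \<and> infinite (space M) \<and> M = count_space (space M))"
  shows "\<not> strictly_monotone_orlicz M \<Phi> p \<and> \<not> strictly_convex_orlicz M \<Phi> p"
proof -
  note phi = assms(6) and apos = assms(7) and ln = assms(3) and p10 = assms(4)
  define a where "a = orlicz_a \<Phi>"
  have a0: "a > 0" using apos by (simp add: a_def)
  have infM: "emeasure M (space M) = \<infinity>"
    using assms(8)
  proof
    assume "non_atomic M \<and> emeasure M (space M) = \<infinity>" then show ?thesis by simp
  next
    assume h: "countable (space M) \<and> infinite (space M) \<and> M = count_space (space M)"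
    have e: "emeasure (count_space (space M)) (space M) = \<infinity>"
      by (rule emeasure_count_space_infinite) (use h in auto)
    from h have "M = count_space (space M)" by blast
    then have "emeasure M = emeasure (count_space (space M))" by (rule arg_cong)
    with e show ?thesis by simp
  qed
  obtain AA where AA: "countable AA" "AA \<subseteq> sets M" "\<Union>AA = space M" "\<forall>A\<in>AA. emeasure M A \<noteq> \<infinity>"
    using sigma_finite_measure.sigma_finite_countable[OF assms(1)] by blast
  obtain B where B: "B \<in> sets M" "emeasure M B \<noteq> 0" "emeasure M B \<noteq> \<infinity>"
  proof (rule ccontr)
    assume "\<not> thesis"
    have "A \<in> null_sets M" if "A \<in> AA" for A
    proof -
      have As: "A \<in> sets M" using AA(2) that by blast
      have "emeasure M A = 0"
      proof (rule ccontr)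
        assume "emeasure M A \<noteq> 0"
        then have thesis using AA(4) that As \<open>\<And>B. B \<in> sets M \<Longrightarrow> emeasure M B \<noteq> 0 \<Longrightarrow> emeasure M B \<noteq> \<infinity> \<Longrightarrow> thesis\<close> by blast
        with \<open>\<not> thesis\<close> show False by simp
      qed
      then show ?thesis using As by (simp add: null_sets_def)
    qed
    then have NS: "\<And>A. A \<in> AA \<Longrightarrow> A \<in> null_sets M" .
    have "(\<Union>A\<in>AA. A) \<in> null_sets M" by (rule null_sets_UN'[OF AA(1)]) (rule NS)
    then show False using AA(3) infM by (simp add: null_sets_def)
  qed
  have Bsp: "B \<subseteq> space M" using B(1) sets.sets_into_space by blast
  define S where "S = space M - B"
  have S: "S \<in> sets M" using B(1) by (simp add: S_def sets.Diff)
  have SI: "emeasure M S = \<infinity>"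
    using emeasure_Diff[OF B(3) sets.top B(1) Bsp] infM B(3) by (simp add: S_def ennreal_minus_top)
  define f1 where "f1 = (\<lambda>t::'a. a)"
  define f2 where "f2 = (\<lambda>t::'a. if t \<in> B then a / 2 else a)"
  have m1: "f1 \<in> borel_measurable M" by (simp add: f1_def)
  have m2: "f2 \<in> borel_measurable M" unfolding f2_def using B(1) by measurable
  have bd1: "\<bar>f1 t\<bar> \<le> orlicz_a \<Phi>" for t using a0 by (simp add: f1_def a_def)
  have bd2: "\<bar>f2 t\<bar> \<le> orlicz_a \<Phi>" for t using a0 by (simp add: f2_def a_def)
  have bd3: "\<bar>(f1 t + f2 t) / 2\<bar> \<le> orlicz_a \<Phi>" for t using a0 by (simp add: f1_def f2_def a_def)
  have space: "f \<in> orlicz_space M \<Phi>" if "f \<in> borel_measurable M" "\<And>t. \<bar>f t\<bar> \<le> orlicz_a \<Phi>" for f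
  proof -
    have "orlicz_modular M \<Phi> (\<lambda>t. (1/2) * f t) = 0"
      by (rule modular_zero[of \<Phi> M f "1/2", OF phi apos]) (use that in auto)
    then show ?thesis unfolding orlicz_space_def using that(1)
      by (intro CollectI conjI exI[of _ "1/2"]) auto
  qed
  have s1: "f1 \<in> orlicz_space M \<Phi>" by (rule space[OF m1 bd1])
  have s2: "f2 \<in> orlicz_space M \<Phi>" by (rule space[OF m2 bd2])
  have n1: "orlicz_p_norm M \<Phi> p f1 = 1"
    by (rule norm_one[OF phi apos ln p10 _ S SI]) (use apos in \<open>auto simp: bd1 f1_def a_def\<close>)
  have n2: "orlicz_p_norm M \<Phi> p f2 = 1"
    by (rule norm_one[OF phi apos ln p10 _ S SI]) (use apos in \<open>auto simp: bd2 f2_def a_def S_def\<close>)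
  have n3: "orlicz_p_norm M \<Phi> p (\<lambda>t. (f1 t + f2 t) / 2) = 1"
    by (rule norm_one[OF phi apos ln p10 _ S SI]) (use apos in \<open>auto simp: bd3 f1_def f2_def a_def S_def\<close>)
  have nAE: "\<not> (AE t in M. f2 t = f1 t)"
  proof -
    have "{t \<in> space M. \<not> f2 t = f1 t} = B" using Bsp a0 by (auto simp: f1_def f2_def)
    from AE_iff_measurable[OF B(1) this] B(2) show ?thesis by simp
  qed
  have nAE': "\<not> (AE t in M. f1 t = f2 t)"
  proof
    assume "AE t in M. f1 t = f2 t"
    then have "AE t in M. f2 t = f1 t" by (rule eventually_mono) simp
    with nAE show False by simp
  qed
  have "\<not> strictly_monotone_orlicz M \<Phi> p"
  proof
    assume "strictly_monotone_orlicz M \<Phi> p"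
    have A1: "(AE t in M. 0 \<le> f2 t) \<and> (AE t in M. f2 t \<le> f1 t) \<and> \<not> (AE t in M. f2 t = f1 t)"
    proof (intro conjI AE_I2)
      fix t show "0 \<le> f2 t" using a0 by (simp add: f2_def)
      show "f2 t \<le> f1 t" using a0 by (simp add: f1_def f2_def)
    qed (rule nAE)
    have "orlicz_p_norm M \<Phi> p f2 < orlicz_p_norm M \<Phi> p f1"
      by (rule mp[OF bspec[OF bspec[OF \<open>strictly_monotone_orlicz M \<Phi> p\<close>[unfolded strictly_monotone_orlicz_def] s2] s1] A1])
    then show False using n1 n2 by simp
  qed
  moreover have "\<not> strictly_convex_orlicz M \<Phi> p"
  proof
    assume "strictly_convex_orlicz M \<Phi> p"
    have "orlicz_p_norm M \<Phi> p (\<lambda>t. (f1 t + f2 t) / 2) < 1"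
      by (rule mp[OF bspec[OF bspec[OF \<open>strictly_convex_orlicz M \<Phi> p\<close>[unfolded strictly_convex_orlicz_def] s1] s2]])
        (intro conjI n1 n2 nAE')
    then show False using n3 by simp
  qed
  ultimately show ?thesis by blast
qed

end
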